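(* Let $\Omega\subseteq\mathbb{R}^n$ be open, $u:\Omega\to\mathbb{R}^N$ continuous, $x\in\Omega$, $\xi\in\mathbb{S}^{N-1}$, $\eta\in\mathbb{S}^{N-1}$ with $\eta^\top\xi=0$, and $A$ a positive semidefinite symmetric $n\times n$ matrix. If $(P,\mathbf{X})\in J^{2,\xi}u(x)$ and $\big(\eta^\top P,\ \eta^\top\mathbf{X}-\frac12A\big)\in J^{2,+}(\eta^\top u)(x)$, then $(P,\mathbf{X}-\eta\otimes A)\in J^{2,\xi}u(x)$.
   Context: $\mathbf{X}=(\mathbf{X}_{\alpha ij})\in\mathbb{R}^N\otimes\mathbb{R}^{n\times n}_s$ is symmetric in $i,j$; $\mathbf{X}:z\otimes z$ has components $\sum_{ij}\mathbf{X}_{\alpha ij}z_iz_j$; $\eta^\top\mathbf{X}:=(\sum_\alpha\eta_\alpha\mathbf{X}_{\alpha ij})_{ij}$, $\eta^\top P\in\mathbb{R}^{1\times n}$, $\eta\otimes A:=(\eta_\alpha A_{ij})$. For $a,b\in\mathbb{R}^N$, $a\vee b:=\frac12(a\otimes b+b\otimes a)$; matrix inequalities in the sense of quadratic forms. Second contact jet: $J^{2,\xi}u(x)$ is the set of $(P,\mathbf{X})\in\mathbb{R}^{N\times n}\times(\mathbb{R}^N\otimes\mathbb{R}^{n\times n}_s)$ for which there is a continuous $T:\mathbb{R}^n\setminus\{0\}\to\mathbb{R}^{N\times N}_s$ with $|T(y)|\to0$ as $y\to0$ and $\xi\vee[u(z)-u(x)-P(z-x)-\frac12\mathbf{X}:(z-x)\otimes(z-x)]\le|z-x|^2T(z-x)$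 for $z\ne x$ near $x$. Scalar second superjet: for $v:\Omega\to\mathbb{R}$, $J^{2,+}v(x)$ is the set of $(p,Y)\in\mathbb{R}^{1\times n}\times\mathbb{R}^{n\times n}_s$ with $v(z)\le v(x)+p(z-x)+\frac12Y:(z-x)\otimes(z-x)+o(|z-x|^2)$ as $z\to x$. *)

theory Defs
  imports "HOL-Analysis.Analysis"
begin

text \<open>R^n = real^'n, R^N = real^'m. A matrix P in R^{N x n} is real^'n^'m (P $ alpha $ i).
 A tensor X in R^N (x) R^{n x n}_s is real^'n^'n^'m (X $ alpha $ i $ j).\<close>

definition sym_mat :: "real^'n^'n \<Rightarrow> bool" where
  "sym_mat A \<longleftrightarrow> transpose A = A"

definition sym_tensor :: "real^'n^'n^'m \<Rightarrow> bool" where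
  "sym_tensor X \<longleftrightarrow> (\<forall>\<alpha>. transpose (X $ \<alpha>) = X $ \<alpha>)"

definition tensor_quad :: "real^'n^'n^'m \<Rightarrow> real^'n \<Rightarrow> real^'m" where
  "tensor_quad X z = (\<chi> \<alpha>. z \<bullet> ((X $ \<alpha>) *v z))"

definition contract :: "real^'m \<Rightarrow> real^'n^'n^'m \<Rightarrow> real^'n^'n" where
  "contract \<eta> X = (\<chi> i j. \<Sum>\<alpha>\<in>UNIV. \<eta> $ \<alpha> * X $ \<alpha> $ i $ j)"

definition tens :: "real^'m \<Rightarrow> real^'n^'n \<Rightarrow> real^'n^'n^'m" where
  "tens \<eta> A = (\<chi> \<alpha> i j. \<eta> $ \<alpha> * A $ i $ j)"

definition sym_prod :: "real^'m \<Rightarrow> real^'m \<Rightarrow> real^'m^'m" where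
  "sym_prod a b = (\<chi> i j. (a $ i * b $ j + b $ i * a $ j) / 2)"

definition qf_le :: "real^'m^'m \<Rightarrow> real^'m^'m \<Rightarrow> bool" where
  "qf_le M M' \<longleftrightarrow> (\<forall>w. w \<bullet> (M *v w) \<le> w \<bullet> (M' *v w))"

definition contact_jet2 ::
  "(real^'n) set \<Rightarrow> (real^'n \<Rightarrow> real^'m) \<Rightarrow> real^'m \<Rightarrow> real^'n
     \<Rightarrow> ((real^'n^'m) \<times> (real^'n^'n^'m)) set" where
  "contact_jet2 \<Omega> u \<xi> x = {(P, X). sym_tensor X \<and>
     (\<exists>T :: real^'n \<Rightarrow> real^'m^'m.
        continuous_on (UNIV - {0}) T \<and> (\<forall>y. y \<noteq> 0 \<longrightarrow> transpose (T y) = T y) \<and>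
        (T \<longlongrightarrow> 0) (at 0) \<and>
        (\<exists>d>0. \<forall>z\<in>\<Omega>. z \<noteq> x \<and> dist z x < d \<longrightarrow>
           qf_le (sym_prod \<xi> (u z - u x - P *v (z - x) - (1/2) *\<^sub>R tensor_quad X (z - x)))
                 ((norm (z - x))\<^sup>2 *\<^sub>R T (z - x))))}"

definition superjet2 ::
  "(real^'n) set \<Rightarrow> (real^'n \<Rightarrow> real) \<Rightarrow> real^'n \<Rightarrow> ((real^'n) \<times> (real^'n^'n)) set" where
  "superjet2 \<Omega> v x = {(p, Y). sym_mat Y \<and>
     (\<forall>e>0. \<exists>d>0. \<forall>z\<in>\<Omega>. dist z x < d \<longrightarrow>
        v z \<le> v x + p \<bullet> (z - x) + (1/2) * ((z - x) \<bullet> (Y *v (z - x))) + e * (norm (z - x))\<^sup>2)}"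

end

theory Submission
  imports Defs
begin

definition msum :: "real^'a^'b \<Rightarrow> real" where
  "msum M = (\<Sum>i\<in>UNIV. \<Sum>j\<in>UNIV. \<bar>M $ i $ j\<bar>)"

lemma norm_mv_le: "norm ((M::real^'a^'b) *v x) \<le> msum M * norm x"
proof -
  have "norm (M *v x) \<le> (\<Sum>i\<in>UNIV. \<bar>(M *v x) $ i\<bar>)"
    by (rule norm_le_l1_cart)
  also have "\<dots> \<le> (\<Sum>i\<in>UNIV. \<Sum>j\<in>UNIV. \<bar>M $ i $ j\<bar> * norm x)"
  proof (rule sum_mono)
    fix i
    have "\<bar>(M *v x) $ i\<bar> \<le> \<bar>\<Sum>j\<in>UNIV. M $ i $ j * x $ j\<bar>"
      by (simp add: matrix_vector_mult_def)
    also have "\<dots> \<le> (\<Sum>j\<in>UNIV. \<bar>M $ i $ j * x $ j\<bar>)"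
      by (rule sum_abs)
    also have "\<dots> \<le> (\<Sum>j\<in>UNIV. \<bar>M $ i $ j\<bar> * norm x)"
      by (rule sum_mono) (simp add: abs_mult component_le_norm_cart mult_left_mono)
    finally show "\<bar>(M *v x) $ i\<bar> \<le> (\<Sum>j\<in>UNIV. \<bar>M $ i $ j\<bar> * norm x)" .
  qed
  finally show ?thesis by (simp add: msum_def sum_distrib_right)
qed

lemma quad_le_msum: "v \<bullet> ((M::real^'a^'a) *v v) \<le> msum M * (v \<bullet> v)"
proof -
  have "v \<bullet> (M *v v) \<le> norm v * norm (M *v v)"
    using Cauchy_Schwarz_ineq2 abs_le_D1 by blast
  also have "\<dots> \<le> norm v * (msum M * norm v)"
    by (simp add: mult_left_mono norm_mv_le)
  also have "\<dots> = msum M * (v \<bullet> v)"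
    by (simp add: power2_norm_eq_inner[symmetric] power2_eq_square)
  finally show ?thesis .
qed

lemma msum_cont[continuous_intros]:
  "continuous_on S f \<Longrightarrow> continuous_on S (\<lambda>y. msum (f y :: real^'a^'b))"
  unfolding msum_def by (intro continuous_intros)

lemma msum_tendsto: "((f::'c \<Rightarrow> real^'a^'b) \<longlongrightarrow> 0) F \<Longrightarrow> ((\<lambda>y. msum (f y)) \<longlongrightarrow> 0) F"
proof -
  assume "(f \<longlongrightarrow> 0) F"
  then have "((\<lambda>y. msum (f y)) \<longlongrightarrow> msum (0::real^'a^'b)) F"
    unfolding msum_def by (intro tendsto_intros)
  then show ?thesis by (simp add: msum_def)
qed

lemma L1: "\<eta> \<bullet> (P *v h) = (\<eta> v* P) \<bullet> (h::real^'n)"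
  by (simp add: dot_lmul_matrix)

lemma L2: "\<eta> \<bullet> tensor_quad X h = h \<bullet> (contract \<eta> X *v h)"
proof -
  have "\<eta> \<bullet> tensor_quad X h = (\<Sum>a\<in>UNIV. \<Sum>i\<in>UNIV. \<Sum>j\<in>UNIV. \<eta>$a * (h$i * (X$a$i$j * h$j)))"
    by (simp add: tensor_quad_def inner_vec_def matrix_vector_mult_def sum_distrib_left)
  also have "\<dots> = (\<Sum>i\<in>UNIV. \<Sum>a\<in>UNIV. \<Sum>j\<in>UNIV. \<eta>$a * (h$i * (X$a$i$j * h$j)))"
    by (rule sum.swap)
  also have "\<dots> = (\<Sum>i\<in>UNIV. \<Sum>j\<in>UNIV. \<Sum>a\<in>UNIV. \<eta>$a * (h$i * (X$a$i$j * h$j)))"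
    by (rule sum.cong[OF refl], rule sum.swap)
  also have "\<dots> = h \<bullet> (contract \<eta> X *v h)"
    by (simp add: contract_def inner_vec_def matrix_vector_mult_def sum_distrib_left sum_distrib_right mult_ac)
  finally show ?thesis .
qed

lemma L3: "tensor_quad (X - Y) h = tensor_quad X h - tensor_quad Y h"
  unfolding tensor_quad_def
  by (simp add: vec_eq_iff matrix_vector_mult_diff_rdistrib inner_diff_right)

lemma L4: "tensor_quad (tens \<eta> A) h = (h \<bullet> (A *v h)) *\<^sub>R \<eta>"
proof -
  have e: "tens \<eta> A $ a = \<eta> $ a *\<^sub>R A" for a
    by (simp add: tens_def vec_eq_iff)
  show ?thesis unfolding tensor_quad_def
  proof (subst vec_eq_iff, rule allI)
    fix i
    show "(\<chi> \<alpha>. h \<bullet> (tens \<eta> A $ \<alpha> *v h)) $ i = ((h \<bullet> (A *v h)) *\<^sub>R \<eta>) $ i"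
      unfolding vec_lambda_beta e
      by (simp add: scaleR_matrix_vector_assoc[symmetric] mult.commute)
  qed
qed

lemma L5: "v \<bullet> (sym_prod a b *v v) = (v \<bullet> a) * (v \<bullet> b)"
proof -
  have "v \<bullet> (sym_prod a b *v v) = (\<Sum>i\<in>UNIV. \<Sum>j\<in>UNIV. (v$i * a$i) * (v$j * b$j) / 2 + (v$j * a$j) * (v$i * b$i) / 2)"
    by (simp add: sym_prod_def inner_vec_def matrix_vector_mult_def sum_distrib_left add_divide_distrib
        distrib_left distrib_right mult_ac)
  also have "\<dots> = (\<Sum>i\<in>UNIV. \<Sum>j\<in>UNIV. (v$i * a$i) * (v$j * b$j) / 2) + (\<Sum>i\<in>UNIV. \<Sum>j\<in>UNIV. (v$j * a$j) * (v$i * b$i) / 2)"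
    by (simp add: sum.distrib)
  also have "(\<Sum>i\<in>UNIV. \<Sum>j\<in>UNIV. (v$j * a$j) * (v$i * b$i) / 2) = (\<Sum>i\<in>UNIV. \<Sum>j\<in>UNIV. (v$i * a$i) * (v$j * b$j) / 2)"
    by (rule sum.swap)
  also have "(\<Sum>i\<in>UNIV. \<Sum>j\<in>UNIV. (v$i * a$i) * (v$j * b$j) / 2) = (v \<bullet> a) * (v \<bullet> b) / 2"
    by (simp add: inner_vec_def sum_product sum_divide_distrib)
  finally show ?thesis by simp
qed

lemma L6: "v \<bullet> ((c *\<^sub>R mat 1) *v v) = c * (v \<bullet> (v::real^'a))"
  by (simp add: scaleR_matrix_vector_assoc[symmetric])

lemma core:
  fixes s t q \<gamma> a K r n2 b :: real
  assumes "a \<ge> 0" "s * q \<le> n2 * K * r" "s * (q - 2*t*\<gamma>) \<le> n2 * K * r" "s^2+t^2 \<le> r"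
    "b = \<gamma> + a/4"
  shows "s * (q + a/2*t) \<le> n2 * K * r + max 0 b * r"
proof (cases "s*t \<ge> 0")
  case True
  have e: "s * (q + a/2*t) = s * (q - 2*t*\<gamma>) + 2*(s*t)*b" by (simp add: assms algebra_simps)
  have "2*(s*t)*b \<le> 2*(s*t)*max 0 b" using True by (intro mult_left_mono) auto
  moreover have "2*(s*t) \<le> s^2+t^2"
    using sum_squares_bound[of s t] by (simp add: power2_eq_square)
  then have "2*(s*t)*max 0 b \<le> (s^2+t^2)*max 0 b" by (intro mult_right_mono) auto
  moreover have "(s^2+t^2)*max 0 b \<le> r * max 0 b" using assms(4) by (intro mult_right_mono) auto
  ultimately show ?thesis using e assms(3) by (simp add: mult.commute)
next
  case False
  have "a/2*(s*t) \<le> 0" using False assms(1) mult_nonneg_nonpos[of "a/2" "s*t"] by simp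
  moreover have "0 \<le> max 0 b * r"
    using assms(4) by (intro mult_nonneg_nonneg) (auto intro: order_trans[rotated])
  ultimately show ?thesis using assms(2) by (simp add: algebra_simps)
qed

lemma bessel2:
  fixes v \<xi> \<eta> :: "real^'m"
  assumes "\<xi> \<bullet> \<xi> = 1" "\<eta> \<bullet> \<eta> = 1" "\<eta> \<bullet> \<xi> = 0"
  shows "(v \<bullet> \<xi>)^2 + (v \<bullet> \<eta>)^2 \<le> v \<bullet> v"
proof -
  let ?r = "v - (v \<bullet> \<xi>) *\<^sub>R \<xi> - (v \<bullet> \<eta>) *\<^sub>R \<eta>"
  have "0 \<le> ?r \<bullet> ?r" by simp
  also have "?r \<bullet> ?r = v \<bullet> v - (v \<bullet> \<xi>)^2 - (v \<bullet> \<eta>)^2"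
    using assms by (simp add: inner_diff_left inner_diff_right inner_commute power2_eq_square algebra_simps)
  finally show ?thesis by simp
qed

theorem lemma33:
  fixes \<Omega> :: "(real^'n) set" and u :: "real^'n \<Rightarrow> real^'m"
    and x :: "real^'n" and \<xi> \<eta> :: "real^'m" and A :: "real^'n^'n"
    and P :: "real^'n^'m" and X :: "real^'n^'n^'m"
  assumes "open \<Omega>" and "continuous_on \<Omega> u" and "x \<in> \<Omega>"
    and "norm \<xi> = 1" and "norm \<eta> = 1" and "\<eta> \<bullet> \<xi> = 0"
    and "sym_mat A" and "\<forall>v. 0 \<le> v \<bullet> (A *v v)"
    and "(P, X) \<in> contact_jet2 \<Omega> u \<xi> x"
    and "(\<eta> v* P, contract \<eta> X - (1/2) *\<^sub>R A) \<in> superjet2 \<Omega> (\<lambda>z. \<eta> \<bullet> u z) x"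
  shows "(P, X - tens \<eta> A) \<in> contact_jet2 \<Omega> u \<xi> x"
proof -
  from assms(9) obtain T :: "real^'n \<Rightarrow> real^'m^'m" and dT where
    symX: "sym_tensor X" and contT: "continuous_on (UNIV - {0}) T" and
    limT: "(T \<longlongrightarrow> 0) (at 0)" and dT: "dT > 0" and
    hypT: "\<forall>z\<in>\<Omega>. z \<noteq> x \<and> dist z x < dT \<longrightarrow>
           qf_le (sym_prod \<xi> (u z - u x - P *v (z - x) - (1/2) *\<^sub>R tensor_quad X (z - x)))
                 ((norm (z - x))\<^sup>2 *\<^sub>R T (z - x))"
    unfolding contact_jet2_def by auto
  from assms(10) have sj: "\<forall>e>0. \<exists>d>0. \<forall>z\<in>\<Omega>. dist z x < d \<longrightarrow>
        \<eta> \<bullet> u z \<le> \<eta> \<bullet> u x + (\<eta> v* P) \<bullet> (z - x) + (1/2) * ((z - x) \<bullet> ((contract \<eta> X - (1/2) *\<^sub>R A) *v (z - x))) + e * (norm (z - x))\<^sup>2"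
    unfolding superjet2_def by auto
  from assms(1,3) obtain \<rho> where \<rho>: "\<rho> > 0" "cball x \<rho> \<subseteq> \<Omega>"
    using open_contains_cball by blast
  have \<xi>\<xi>: "\<xi> \<bullet> \<xi> = 1" using assms(4) by (simp add: power2_norm_eq_inner[symmetric])
  have \<eta>\<eta>: "\<eta> \<bullet> \<eta> = 1" using assms(5) by (simp add: power2_norm_eq_inner[symmetric])
  define cl where "cl h = (\<rho> / max \<rho> (norm h)) *\<^sub>R h" for h :: "real^'n"
  have cl_small: "cl h = h" if "norm h \<le> \<rho>" for h
    using that \<rho> by (simp add: cl_def max_def)
  have cl_norm: "norm (cl h) \<le> \<rho>" for h
  proof -
    have "norm (cl h) = \<rho> * norm h / max \<rho> (norm h)" using \<rho> by (simp add: cl_def)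
    also have "\<dots> \<le> \<rho>" using \<rho> by (simp add: divide_le_eq max_def)
    finally show ?thesis .
  qed
  have cl_cont: "continuous_on UNIV (\<lambda>z. x + cl (z - x))"
    unfolding cl_def using \<rho> by (intro continuous_intros) (auto simp: max_def)
  define ut where "ut z = u (x + cl (z - x))" for z
  have ut_cont: "continuous_on UNIV ut"
    unfolding ut_def
  proof (rule continuous_on_compose2[OF assms(2) cl_cont])
    show "(\<lambda>z. x + cl (z - x)) ` UNIV \<subseteq> \<Omega>"
      using \<rho>(2) cl_norm by (auto simp: dist_norm subset_iff)
  qed
  define \<beta> where "\<beta> h = \<eta> \<bullet> ut (x + h) - \<eta> \<bullet> u x - (\<eta> v* P) \<bullet> h
     - (1/2) * (h \<bullet> (contract \<eta> X *v h)) + (h \<bullet> (A *v h)) / 4" for h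
  have \<beta>_cont: "continuous_on UNIV \<beta>"
    unfolding \<beta>_def
    by (intro continuous_intros continuous_on_compose2[OF ut_cont]) auto
  define g where "g h = msum (T h) + max 0 (\<beta> h) / (norm h)^2" for h
  define T' where "T' h = g h *\<^sub>R (mat 1 :: real^'m^'m)" for h
  have sym2: "sym_tensor (X - tens \<eta> A)"
    using symX assms(7) unfolding sym_tensor_def sym_mat_def
    by (auto simp: transpose_def vec_eq_iff tens_def)
  have contT': "continuous_on (UNIV - {0}) T'"
  proof -
    have "continuous_on (UNIV - {0}) \<beta>" using \<beta>_cont continuous_on_subset by blast
    then have "continuous_on (UNIV - {0}) g"
      unfolding g_def by (intro continuous_intros contT) auto
    then show ?thesis unfolding T'_def by (intro continuous_intros)
  qed
  have symT': "transpose (T' y) = T' y" for y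
    by (simp add: T'_def transpose_scalar)
  have limb: "((\<lambda>h. max 0 (\<beta> h) / (norm h)^2) \<longlongrightarrow> 0) (at 0)"
  proof (rule tendstoI)
    fix e :: real assume e: "e > 0"
    then obtain d where d: "d > 0" and hd: "\<forall>z\<in>\<Omega>. dist z x < d \<longrightarrow>
        \<eta> \<bullet> u z \<le> \<eta> \<bullet> u x + (\<eta> v* P) \<bullet> (z - x) + (1/2) * ((z - x) \<bullet> ((contract \<eta> X - (1/2) *\<^sub>R A) *v (z - x))) + (e/2) * (norm (z - x))\<^sup>2"
      using sj[rule_format, of "e/2"] by auto
    show "\<forall>\<^sub>F h in at 0. dist (max 0 (\<beta> h) / (norm h)^2) 0 < e"
      unfolding eventually_at
    proof (intro exI[of _ "min d \<rho>"] conjI ballI impI)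
      show "min d \<rho> > 0" using d \<rho> by simp
      fix h :: "real^'n" assume h: "h \<noteq> 0 \<and> dist h 0 < min d \<rho>"
      have zin: "x + h \<in> \<Omega>" using h \<rho>(2) by (auto simp: dist_norm subset_iff)
      have "ut (x + h) = u (x + h)" unfolding ut_def using h by (simp add: cl_small)
      moreover have "\<eta> \<bullet> u (x + h) \<le> \<eta> \<bullet> u x + (\<eta> v* P) \<bullet> h + (1/2) * (h \<bullet> ((contract \<eta> X - (1/2) *\<^sub>R A) *v h)) + (e/2) * (norm h)\<^sup>2"
        using hd[rule_format, OF zin] h by (simp add: dist_norm)
      ultimately have "\<beta> h \<le> (e/2) * (norm h)^2"
        unfolding \<beta>_def by (simp add: matrix_vector_mult_diff_rdistrib inner_diff_right
            scaleR_matrix_vector_assoc[symmetric] algebra_simps)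
      moreover have np: "(norm h)^2 > 0" using h by simp
      ultimately have le: "max 0 (\<beta> h) / (norm h)^2 \<le> e/2"
        using e mult_pos_pos[OF e np] by (simp add: divide_le_eq max_def)
      have q0: "0 \<le> max 0 (\<beta> h) / (norm h)^2" by simp
      show "dist (max 0 (\<beta> h) / (norm h)^2) 0 < e"
        unfolding dist_real_def diff_zero abs_of_nonneg[OF q0] using le e by linarith
    qed
  qed
  have limT': "(T' \<longlongrightarrow> 0) (at 0)"
  proof -
    have "(g \<longlongrightarrow> 0 + 0) (at 0)" unfolding g_def
      by (intro tendsto_add msum_tendsto limT limb)
    then have "((\<lambda>h. g h *\<^sub>R (mat 1 :: real^'m^'m)) \<longlongrightarrow> 0 *\<^sub>R mat 1) (at 0)"
      by (intro tendsto_scaleR tendsto_const) simp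
    then show ?thesis unfolding T'_def by simp
  qed
  have main: "qf_le (sym_prod \<xi> (u z - u x - P *v (z - x) - (1/2) *\<^sub>R tensor_quad (X - tens \<eta> A) (z - x)))
                 ((norm (z - x))\<^sup>2 *\<^sub>R T' (z - x))"
    if z: "z \<in> \<Omega>" "z \<noteq> x" "dist z x < min dT \<rho>" for z
  proof -
    define h where "h = z - x"
    define w where "w = u z - u x - P *v h - (1/2) *\<^sub>R tensor_quad X h"
    define a where "a = h \<bullet> (A *v h)"
    define \<gamma> where "\<gamma> = \<eta> \<bullet> w"
    define n2 where "n2 = (norm h)^2"
    have n2: "n2 > 0" using z by (simp add: n2_def h_def)
    have a0: "a \<ge> 0" using assms(8) by (simp add: a_def)
    have w': "u z - u x - P *v h - (1/2) *\<^sub>R tensor_quad (X - tens \<eta> A) h = w + (a/2) *\<^sub>R \<eta>"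
      by (simp add: w_def L3 L4 a_def algebra_simps)
    have hyp: "(v \<bullet> \<xi>) * (v \<bullet> w) \<le> n2 * (v \<bullet> (T h *v v))" for v
      using hypT[rule_format, of z] z unfolding qf_le_def
      by (auto simp: L5 w_def h_def n2_def scaleR_matrix_vector_assoc[symmetric])
    have "ut (x + h) = u z" unfolding ut_def h_def using z
      by (simp add: cl_small dist_norm)
    then have b: "\<beta> h = \<gamma> + a/4"
      by (simp add: \<beta>_def \<gamma>_def w_def a_def inner_diff_right L1 L2)
    show ?thesis unfolding qf_le_def h_def[symmetric]
    proof
      fix v :: "real^'m"
      define s where "s = v \<bullet> \<xi>"
      define t where "t = v \<bullet> \<eta>"
      define v' where "v' = v - (2*t) *\<^sub>R \<eta>"
      have K: "msum (T h) * (v \<bullet> v) \<ge> v \<bullet> (T h *v v)" by (rule quad_le_msum)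
      have H1: "s * (v \<bullet> w) \<le> n2 * msum (T h) * (v \<bullet> v)"
      proof -
        have "n2 * (v \<bullet> (T h *v v)) \<le> n2 * (msum (T h) * (v \<bullet> v))"
          using K n2 by (intro mult_left_mono) auto
        then show ?thesis using hyp[of v] by (simp add: s_def mult.assoc)
      qed
      have v'v': "v' \<bullet> v' = v \<bullet> v"
        using \<eta>\<eta> by (simp add: v'_def t_def inner_diff_left inner_diff_right inner_commute algebra_simps power2_eq_square)
      have K2: "msum (T h) * (v \<bullet> v) \<ge> v' \<bullet> (T h *v v')" using quad_le_msum[of v' "T h"] v'v' by simp
      have e1: "v' \<bullet> \<xi> = s" using assms(6) by (simp add: v'_def s_def inner_diff_left)
      moreover have e2: "v' \<bullet> w = v \<bullet> w - 2*t*\<gamma>" by (simp add: v'_def \<gamma>_def inner_diff_left)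
      ultimately have H2: "s * (v \<bullet> w - 2*t*\<gamma>) \<le> n2 * msum (T h) * (v \<bullet> v)"
      proof -
        have "n2 * (v' \<bullet> (T h *v v')) \<le> n2 * (msum (T h) * (v \<bullet> v))"
          using K2 n2 by (intro mult_left_mono) auto
        then show ?thesis using hyp[of v'] e1 e2 by (simp add: mult.assoc)
      qed
      have bs: "s^2 + t^2 \<le> v \<bullet> v" unfolding s_def t_def by (rule bessel2[OF \<xi>\<xi> \<eta>\<eta> assms(6)])
      have c: "s * (v \<bullet> w + a/2*t) \<le> n2 * msum (T h) * (v \<bullet> v) + max 0 (\<beta> h) * (v \<bullet> v)"
        by (rule core[OF a0 H1 H2 bs b])
      have "v \<bullet> (sym_prod \<xi> (w + (a/2) *\<^sub>R \<eta>) *v v) = s * (v \<bullet> w + a/2*t)"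
        by (simp add: L5 s_def t_def inner_add_right)
      moreover have "v \<bullet> (((norm h)\<^sup>2 *\<^sub>R T' h) *v v) = n2 * msum (T h) * (v \<bullet> v) + max 0 (\<beta> h) * (v \<bullet> v)"
        using n2 by (simp add: T'_def g_def L6 scaleR_matrix_vector_assoc[symmetric] n2_def[symmetric] algebra_simps)
      ultimately show "v \<bullet> (sym_prod \<xi> (u z - u x - P *v h - (1/2) *\<^sub>R tensor_quad (X - tens \<eta> A) h) *v v)
          \<le> v \<bullet> (((norm h)\<^sup>2 *\<^sub>R T' h) *v v)"
        using c w' by simp
    qed
  qed
  show ?thesis
    unfolding contact_jet2_def
    using sym2 contT' symT' limT' main dT \<rho>(1)
    by (auto intro!: exI[of _ T'] exI[of _ "min dT \<rho>"])
qed

end
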